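(* Let $G$ be a finite, simple, connected graph and let $k\ge 0$. If $G$ contains a $k$-supported cycle, then $\sigma(G)\ge k$.
   Context: For a spanning tree $T$ of $G$, $\mathrm{Stretch}(G:T)=\max_{uv\in E(G)} d_T(u,v)$, and the stretch of $G$ is $\sigma(G)=\min_T \mathrm{Stretch}(G:T)$, the minimum over all spanning trees $T$ of $G$; $d_G,d_T$ denote graph distances. A cycle $C$ in $G$ is called $k$-supported (for a real number $k$) if $C$ can be partitioned into three edge-disjoint paths $I_1,I_2,I_3$, with $I_1\cap I_2$, $I_2\cap I_3$ and $I_3\cap I_1$ each consisting of exactly one vertex, such that for every triple of vertices $(u_1,u_2,u_3)$ with $u_i\in V(I_i)$ for $i=1,2,3$ we have $\max_{i,j\in\{1,2,3\}} d_G(u_i,u_j)\ge k$. *)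

theory Defs
  imports Main "HOL-Library.Extended_Real"
begin

definition simple_graph :: "'a set \<Rightarrow> 'a set set \<Rightarrow> bool" where
  "simple_graph V E \<longleftrightarrow> finite V \<and>
     (\<forall>e\<in>E. \<exists>u v. e = {u, v} \<and> u \<noteq> v \<and> u \<in> V \<and> v \<in> V)"

definition walk :: "'a set \<Rightarrow> 'a set set \<Rightarrow> 'a list \<Rightarrow> bool" where
  "walk V E p \<longleftrightarrow> p \<noteq> [] \<and> set p \<subseteq> V \<and>
     (\<forall>i. Suc i < length p \<longrightarrow> {p ! i, p ! Suc i} \<in> E)"

definition connected_graph :: "'a set \<Rightarrow> 'a set set \<Rightarrow> bool" where
  "connected_graph V E \<longleftrightarrow> (\<forall>u\<in>V. \<forall>v\<in>V.
     \<exists>p. walk V E p \<and> hd p = u \<and> last p = v)"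

text \<open>Graph distance: least number of edges of a walk from u to v
  (used only for connected graphs, where it exists).\<close>

definition gdist :: "'a set \<Rightarrow> 'a set set \<Rightarrow> 'a \<Rightarrow> 'a \<Rightarrow> nat" where
  "gdist V E u v = (LEAST n. \<exists>p. walk V E p \<and> hd p = u \<and> last p = v \<and> length p = Suc n)"

definition is_cycle :: "'a set \<Rightarrow> 'a set set \<Rightarrow> 'a list \<Rightarrow> bool" where
  "is_cycle V E c \<longleftrightarrow> length c \<ge> 3 \<and> distinct c \<and> walk V E c \<and> {last c, hd c} \<in> E"

definition is_tree :: "'a set \<Rightarrow> 'a set set \<Rightarrow> bool" where
  "is_tree V T \<longleftrightarrow> connected_graph V T \<and> \<not> (\<exists>c. is_cycle V T c)"

definition spanning_tree :: "'a set \<Rightarrow> 'a set set \<Rightarrow> 'a set set \<Rightarrow> bool" where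
  "spanning_tree V E T \<longleftrightarrow> T \<subseteq> E \<and> is_tree V T"

definition stretch :: "'a set \<Rightarrow> 'a set set \<Rightarrow> 'a set set \<Rightarrow> nat" where
  "stretch V E T = Max {gdist V T u v | u v. {u, v} \<in> E}"

definition tree_stretch :: "'a set \<Rightarrow> 'a set set \<Rightarrow> nat" where
  "tree_stretch V E = Min {stretch V E T | T. spanning_tree V E T}"

text \<open>A cycle c = [c_0,...,c_{m-1}] is k-supported if it splits into three
  edge-disjoint arcs I1 = c_0..c_b, I2 = c_b..c_c, I3 = c_c..c_{m-1},c_0
  (0 < b < c < m; every partition of a cycle into three edge-disjoint paths
  pairwise meeting in exactly one vertex is of this form up to rotating the
  cycle list) such that every transversal triple has pairwise G-distance
  maximum at least k.\<close>

definition k_supported :: "'a set \<Rightarrow> 'a set set \<Rightarrow> real \<Rightarrow> 'a list \<Rightarrow> bool" where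
  "k_supported V E k cyc \<longleftrightarrow> is_cycle V E cyc \<and>
     (\<exists>b c. 0 < b \<and> b < c \<and> c < length cyc \<and>
        (let I1 = {cyc ! i | i. i \<le> b};
             I2 = {cyc ! i | i. b \<le> i \<and> i \<le> c};
             I3 = {cyc ! i | i. c \<le> i \<and> i < length cyc} \<union> {cyc ! 0}
         in \<forall>u1\<in>I1. \<forall>u2\<in>I2. \<forall>u3\<in>I3.
              max (max (real (gdist V E u1 u2)) (real (gdist V E u2 u3)))
                  (real (gdist V E u1 u3)) \<ge> k))"

end

theory Submission
  imports Defs
begin


fun wk :: "'a set \<Rightarrow> 'a set set \<Rightarrow> 'a list \<Rightarrow> bool" where
  "wk V E [] = False"
| "wk V E [a] = (a \<in> V)"
| "wk V E (a # b # p) = (a \<in> V \<and> {a,b} \<in> E \<and> wk V E (b # p))"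

lemma walk_Cons2: "walk V E (a # b # p) \<longleftrightarrow> a \<in> V \<and> {a,b} \<in> E \<and> walk V E (b # p)"
proof
  assume h: "walk V E (a # b # p)"
  have "{a,b} \<in> E" using h unfolding walk_def
  proof -
    assume "a # b # p \<noteq> [] \<and> set (a # b # p) \<subseteq> V \<and> (\<forall>i. Suc i < length (a # b # p) \<longrightarrow> {(a # b # p) ! i, (a # b # p) ! Suc i} \<in> E)"
    then have "{(a # b # p) ! 0, (a # b # p) ! Suc 0} \<in> E" by (elim conjE allE[of _ 0]) simp
    then show ?thesis by simp
  qed
  moreover have "walk V E (b # p)" unfolding walk_def
  proof (intro conjI allI impI)
    fix i assume "Suc i < length (b # p)"
    then have "Suc (Suc i) < length (a # b # p)" by simp
    then have "{(a # b # p) ! Suc i, (a # b # p) ! Suc (Suc i)} \<in> E" using h unfolding walk_def by blast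
    then show "{(b # p) ! i, (b # p) ! Suc i} \<in> E" by simp
  qed (use h in \<open>auto simp: walk_def\<close>)
  ultimately show "a \<in> V \<and> {a,b} \<in> E \<and> walk V E (b # p)" using h by (simp add: walk_def)
next
  assume h: "a \<in> V \<and> {a,b} \<in> E \<and> walk V E (b # p)"
  show "walk V E (a # b # p)" unfolding walk_def
  proof (intro conjI allI impI)
    show "set (a # b # p) \<subseteq> V" using h by (simp add: walk_def)
  next
    fix i assume "Suc i < length (a # b # p)"
    then show "{(a # b # p) ! i, (a # b # p) ! Suc i} \<in> E" using h
      by (cases i) (auto simp: walk_def)
  qed simp
qed

lemma walk_wk: "walk V E p \<longleftrightarrow> wk V E p"
proof (induction V E p rule: wk.induct)
  case (3 V E a b p)
  then show ?case by (simp only: walk_Cons2 wk.simps)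
qed (auto simp: walk_def)



lemma wk_append: "wk V E p \<Longrightarrow> wk V E q \<Longrightarrow> {last p, hd q} \<in> E \<Longrightarrow> wk V E (p @ q)"
proof (induction V E p rule: wk.induct)
  case (2 V E a)
  then show ?case by (cases q) auto
qed auto

lemma walk_append: "walk V E p \<Longrightarrow> walk V E q \<Longrightarrow> {last p, hd q} \<in> E \<Longrightarrow> walk V E (p @ q)"
  using wk_append walk_wk by metis

lemma walk_append_tl: "walk V E p \<Longrightarrow> walk V E q \<Longrightarrow> last p = hd q \<Longrightarrow> walk V E (p @ tl q)"
proof (cases q)
  case Nil
  assume "walk V E q" then show ?thesis using Nil by (simp add: walk_def)
next
  case (Cons x r)
  assume a: "walk V E p" "walk V E q" "last p = hd q"
  show ?thesis
  proof (cases r)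
    case Nil
    then show ?thesis using a Cons by simp
  next
    case (Cons y r')
    then show ?thesis using a walk_append[of V E p "y # r'"] \<open>q = x # r\<close> by (simp add: walk_Cons2)
  qed
qed

lemma walk_rev: "walk V E p \<Longrightarrow> walk V E (rev p)"
  unfolding walk_def
proof (intro conjI allI impI)
  fix i assume h: "p \<noteq> [] \<and> set p \<subseteq> V \<and> (\<forall>i. Suc i < length p \<longrightarrow> {p ! i, p ! Suc i} \<in> E)"
    and i: "Suc i < length (rev p)"
  define j where "j = length p - Suc (Suc i)"
  have "Suc j < length p" using i j_def by auto
  then have "{p ! j, p ! Suc j} \<in> E" using h by blast
  moreover have "rev p ! i = p ! Suc j" "rev p ! Suc i = p ! j" using i j_def
    by (auto simp: rev_nth Suc_diff_Suc)
  ultimately show "{rev p ! i, rev p ! Suc i} \<in> E" by (simp add: insert_commute)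
qed auto

lemma walk_take: "walk V E p \<Longrightarrow> 0 < n \<Longrightarrow> walk V E (take n p)"
  unfolding walk_def by (auto dest: in_set_takeD)

lemma walk_drop: "walk V E p \<Longrightarrow> n < length p \<Longrightarrow> walk V E (drop n p)"
  unfolding walk_def by (auto dest: in_set_dropD)

lemma walk_mono: "walk V E p \<Longrightarrow> E \<subseteq> E' \<Longrightarrow> walk V E' p"
  unfolding walk_def by blast

lemma walk_tl: "walk V E p \<Longrightarrow> tl p \<noteq> [] \<Longrightarrow> walk V E (tl p)"
  by (cases p) (auto simp: walk_def)

lemma walk_edge: "walk V E p \<Longrightarrow> Suc i < length p \<Longrightarrow> {p ! i, p ! Suc i} \<in> E"
  unfolding walk_def by blast

lemma walk_single: "walk V E [a] \<longleftrightarrow> a \<in> V"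
  unfolding walk_def by auto

lemma walk_nth_V: "walk V E p \<Longrightarrow> i < length p \<Longrightarrow> p ! i \<in> V"
  unfolding walk_def by auto

lemma walk_reach:
  assumes E: "\<And>a b. {a,b} \<in> T \<Longrightarrow> a\<in>V \<Longrightarrow> b\<in>V \<Longrightarrow> (\<exists>q. walk V T' q \<and> hd q = a \<and> last q = b)"
  shows "walk V T p \<Longrightarrow> \<exists>q. walk V T' q \<and> hd q = hd p \<and> last q = last p"
proof (induction p)
  case Nil
  then show ?case by (simp add: walk_def)
next
  case (Cons a p)
  note IH = Cons.IH and wa = Cons.prems
  show ?case
  proof (cases p)
    case Nil
    then show ?thesis using wa by (intro exI[of _ "[a]"]) (simp add: walk_single)
  next
    case (Cons b p')
    have w: "a \<in> V" "{a,b} \<in> T" "walk V T p" using wa Cons walk_Cons2[of V T a b p'] by simp_all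
    obtain q where q: "walk V T' q" "hd q = b" "last q = last p" using IH[OF w(3)] Cons by auto
    have "b \<in> V" using walk_nth_V[OF w(3), of 0] Cons by simp
    then obtain r where r: "walk V T' r" "hd r = a" "last r = b" using E w by blast
    have rne: "r \<noteq> []" using r(1) walk_def by blast
    have "walk V T' (r @ tl q)" using walk_append_tl[OF r(1) q(1)] q r by simp
    moreover have "hd (r @ tl q) = a" using r rne by simp
    moreover have "last (r @ tl q) = last p"
    proof (cases "tl q = []")
      case True
      then have "q = [b]" using q(1,2) by (cases q) (auto simp: walk_def)
      then show ?thesis using q r True by simp
    next
      case False
      then show ?thesis using q by (simp add: last_tl)
    qed
    ultimately have "\<exists>q. walk V T' q \<and> hd q = a \<and> last q = last p" by blast
    then show ?thesis using Cons by simp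
  qed
qed



lemma sg_edge: "simple_graph V E \<Longrightarrow> {a,b} \<in> E \<Longrightarrow> a \<in> V \<and> b \<in> V \<and> a \<noteq> b"
proof -
  assume h: "simple_graph V E" "{a,b} \<in> E"
  then have "\<exists>u v. {a,b} = {u,v} \<and> u \<noteq> v \<and> u \<in> V \<and> v \<in> V" unfolding simple_graph_def by (elim conjE bspec)
  then obtain u v where "{a,b} = {u,v}" "u \<noteq> v" "u \<in> V" "v \<in> V" by (elim exE conjE)
  then have "(a = u \<and> b = v) \<or> (a = v \<and> b = u)" by (simp only: doubleton_eq_iff)
  then show ?thesis using \<open>u \<noteq> v\<close> \<open>u \<in> V\<close> \<open>v \<in> V\<close> by blast
qed

lemma sg_finite_E: "simple_graph V E \<Longrightarrow> finite E"
proof -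
  assume h: "simple_graph V E"
  then have "E \<subseteq> Pow V" unfolding simple_graph_def by auto
  moreover have "finite V" using h unfolding simple_graph_def by blast
  ultimately show ?thesis using finite_subset by (metis finite_Pow_iff)
qed

lemma cycle_walk_minus:
  assumes c: "is_cycle V T c"
  shows "walk V (T - {{last c, hd c}}) c"
proof -
  have len: "length c \<ge> 3" and d: "distinct c" and w: "walk V T c" using c unfolding is_cycle_def by auto
  have ne: "c \<noteq> []" using len by auto
  have lst: "last c = c ! (length c - 1)" "hd c = c ! 0" using ne by (auto simp: last_conv_nth hd_conv_nth)
  have base: "c \<noteq> [] \<and> set c \<subseteq> V" using w unfolding walk_def by blast
  have all: "\<forall>i. Suc i < length c \<longrightarrow> {c ! i, c ! Suc i} \<in> T - {{last c, hd c}}"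
  proof (intro allI impI)
    fix i assume i: "Suc i < length c"
    have e: "{c ! i, c ! Suc i} \<in> T" using w i walk_edge by metis
    have "{c ! i, c ! Suc i} \<noteq> {last c, hd c}"
    proof
      assume "{c ! i, c ! Suc i} = {last c, hd c}"
      then have "(c ! i = last c \<and> c ! Suc i = hd c) \<or> (c ! i = hd c \<and> c ! Suc i = last c)"
        by (simp only: doubleton_eq_iff)
      then show False
      proof
        assume a: "c ! i = last c \<and> c ! Suc i = hd c"
        have "c ! i = c ! (length c - 1)" using a lst by simp
        then have "i = length c - 1" using nth_eq_iff_index_eq[OF d, of i "length c - 1"] i len by simp
        then show False using i by simp
      next
        assume a: "c ! i = hd c \<and> c ! Suc i = last c"
        have "c ! Suc i = c ! (length c - 1)" using a lst by simp
        then have "Suc i = length c - 1" using nth_eq_iff_index_eq[OF d, of "Suc i" "length c - 1"] i len by simp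
        moreover have "c ! i = c ! 0" using a lst by simp
        then have "i = 0" using nth_eq_iff_index_eq[OF d, of i 0] i len ne by simp
        ultimately show False using len by simp
      qed
    qed
    then show "{c ! i, c ! Suc i} \<in> T - {{last c, hd c}}" using e by blast
  qed
  show ?thesis unfolding walk_def
    apply (rule conjI) apply (rule conjunct1[OF base]) apply (rule conjI) apply (rule conjunct2[OF base])
    by (rule all)
qed

lemma spanning_tree_exists:
  assumes sg: "simple_graph V E" and cg: "connected_graph V E"
  shows "\<exists>T. spanning_tree V E T"
proof -
  have fE: "finite E" using sg sg_finite_E by blast
  have "\<exists>T. (T \<subseteq> E \<and> connected_graph V T) \<and> (\<forall>T'. T' \<subseteq> E \<and> connected_graph V T' \<longrightarrow> card T \<le> card T')"
    by (rule ex_has_least_nat[of _ E]) (use cg in simp)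
  then obtain T where T: "T \<subseteq> E \<and> connected_graph V T"
    and min: "\<And>T'. T' \<subseteq> E \<and> connected_graph V T' \<Longrightarrow> card T \<le> card T'" by blast
  have "\<not> (\<exists>c. is_cycle V T c)"
  proof
    assume "\<exists>c. is_cycle V T c"
    then obtain c where c: "is_cycle V T c" by blast
    define T' where "T' = T - {{last c, hd c}}"
    have eT: "{last c, hd c} \<in> T" using c unfolding is_cycle_def by blast
    have cw: "walk V T' c" using cycle_walk_minus[OF c] T'_def by simp
    have conn: "connected_graph V T'" unfolding connected_graph_def
    proof (intro ballI)
      fix u v assume uv: "u \<in> V" "v \<in> V"
      then obtain p where p: "walk V T p" "hd p = u" "last p = v" using T uv unfolding connected_graph_def by blast
      have "\<exists>q. walk V T' q \<and> hd q = hd p \<and> last q = last p"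
      proof (rule walk_reach[OF _ p(1)])
        fix a b assume ab: "{a,b} \<in> T" "a \<in> V" "b \<in> V"
        show "\<exists>q. walk V T' q \<and> hd q = a \<and> last q = b"
        proof (cases "{a,b} = {last c, hd c}")
          case True
          then have "(a = last c \<and> b = hd c) \<or> (a = hd c \<and> b = last c)" by (simp only: doubleton_eq_iff)
          then show ?thesis
          proof
            assume "a = last c \<and> b = hd c"
            moreover have "walk V T' (rev c)" using cw walk_rev by blast
            moreover have "c \<noteq> []" using cw unfolding walk_def by blast
            ultimately show ?thesis by (intro exI[of _ "rev c"]) (simp add: hd_rev last_rev)
          next
            assume "a = hd c \<and> b = last c" then show ?thesis using cw by blast
          qed
        next
          case False
          then have "walk V T' [a,b]" using ab T'_def by (simp add: walk_Cons2 walk_single)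
          then show ?thesis by (intro exI[of _ "[a,b]"]) simp
        qed
      qed
      then show "\<exists>p. walk V T' p \<and> hd p = u \<and> last p = v" using p by blast
    qed
    have "finite T" using T fE finite_subset by blast
    then have "card T' < card T" unfolding T'_def using eT by (rule card_Diff1_less)
    moreover have "T' \<subseteq> E" using T T'_def by blast
    ultimately have "card T \<le> card T'" using min conn by blast
    then show False using \<open>card T' < card T\<close> by simp
  qed
  then show ?thesis using T unfolding spanning_tree_def is_tree_def by blast
qed



lemma gd_le: "walk V T p \<Longrightarrow> gdist V T (hd p) (last p) < length p"
proof -
  assume w: "walk V T p"
  have "length p = Suc (length p - 1)" using w unfolding walk_def by (cases p) auto
  then have "gdist V T (hd p) (last p) \<le> length p - 1" unfolding gdist_def
    using w by (intro Least_le) metis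
  then show ?thesis using w unfolding walk_def by (cases p) auto
qed

lemma gd_ex: "connected_graph V T \<Longrightarrow> u \<in> V \<Longrightarrow> v \<in> V \<Longrightarrow>
   \<exists>p. walk V T p \<and> hd p = u \<and> last p = v \<and> length p = Suc (gdist V T u v)"
proof -
  assume c: "connected_graph V T" "u \<in> V" "v \<in> V"
  then obtain p where p: "walk V T p" "hd p = u" "last p = v" unfolding connected_graph_def by blast
  have "length p = Suc (length p - 1)" using p(1) unfolding walk_def by (cases p) auto
  then have "\<exists>n p. walk V T p \<and> hd p = u \<and> last p = v \<and> length p = Suc n" using p by blast
  then show ?thesis unfolding gdist_def by (rule LeastI_ex)
qed

lemma geodesic_distinct:
  assumes w: "walk V T p" and l: "length p = Suc (gdist V T (hd p) (last p))"
  shows "distinct p"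
proof (rule ccontr)
  assume "\<not> distinct p"
  then obtain i j where ij: "i < j" "j < length p" "p ! i = p ! j"
    by (metis distinct_conv_nth linorder_neqE_nat)
  define p' where "p' = take (Suc i) p @ tl (drop j p)"
  have w1: "walk V T (take (Suc i) p)" using walk_take w by blast
  have w2: "walk V T (drop j p)" using walk_drop w ij by blast
  have l1: "last (take (Suc i) p) = p ! i" using ij by (simp add: take_Suc_conv_app_nth)
  have h2: "hd (drop j p) = p ! j" using ij by (simp add: hd_drop_conv_nth)
  have wp: "walk V T p'" unfolding p'_def using walk_append_tl[OF w1 w2] l1 h2 ij by simp
  have hp: "hd p' = hd p" unfolding p'_def using ij by (cases p) auto
  have lp: "last p' = last p"
  proof (cases "tl (drop j p) = []")
    case True
    then have "length (tl (drop j p)) = 0" by simp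
    then have "j = length p - 1" using ij by simp
    moreover have "p \<noteq> []" using ij by auto
    ultimately show ?thesis unfolding p'_def using True l1 ij by (simp add: last_conv_nth)
  next
    case False
    then have "last p' = last (tl (drop j p))" unfolding p'_def by simp
    also have "\<dots> = last (drop j p)" using False by (simp add: last_tl)
    also have "\<dots> = last p" using ij by simp
    finally show ?thesis .
  qed
  have "length p' < length p" unfolding p'_def using ij by simp
  moreover have "gdist V T (hd p) (last p) < length p'" using gd_le[OF wp] hp lp by simp
  ultimately show False using l by simp
qed



lemma cycle_from_fork:
  assumes wp: "walk V T (u # p')" and dp: "distinct (u # p')"
    and wq: "walk V T (u # q')" and dq: "distinct (u # q')"
    and pne: "p' \<noteq> []" and qne: "q' \<noteq> []" and hne: "hd p' \<noteq> hd q'" and ll: "last p' = last q'"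
  shows "\<exists>c. is_cycle V T c"
proof -
  have ex: "\<exists>i. i < length p' \<and> p' ! i \<in> set q'"
  proof (intro exI conjI)
    show "length p' - 1 < length p'" using pne by simp
    have "p' ! (length p' - 1) = last q'" using pne ll by (simp add: last_conv_nth)
    then show "p' ! (length p' - 1) \<in> set q'" using qne by simp
  qed
  define i where "i = (LEAST i. i < length p' \<and> p' ! i \<in> set q')"
  have i: "i < length p'" "p' ! i \<in> set q'" using LeastI_ex[OF ex] unfolding i_def by auto
  have imin: "\<And>t. t < i \<Longrightarrow> p' ! t \<notin> set q'"
  proof -
    fix t assume "t < i"
    then have "\<not> (t < length p' \<and> p' ! t \<in> set q')" unfolding i_def by (rule not_less_Least)
    then show "p' ! t \<notin> set q'" using \<open>t < i\<close> i(1) by simp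
  qed
  obtain j where j: "j < length q'" "q' ! j = p' ! i" using i(2) by (metis in_set_conv_nth)
  define A where "A = u # take (Suc i) p'"
  define B where "B = rev (take j q')"
  define cy where "cy = A @ B"
  have wp': "walk V T p'" using walk_tl[OF wp] pne by simp
  have wq': "walk V T q'" using walk_tl[OF wq] qne by simp
  have dp': "distinct p'" "u \<notin> set p'" using dp by auto
  have dq': "distinct q'" "u \<notin> set q'" using dq by auto
  have wA: "walk V T A" unfolding A_def using walk_take[OF wp, of "Suc (Suc i)"] by simp
  have lA: "last A = p' ! i" unfolding A_def using i(1) by (simp add: take_Suc_conv_app_nth)
  have hA: "hd A = u" unfolding A_def by simp
  have lastcy: "last cy = q' ! 0"
  proof (cases "j = 0")
    case True
    then show ?thesis unfolding cy_def B_def using lA j by simp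
  next
    case False
    then have "B \<noteq> []" unfolding B_def using qne by simp
    then have "last cy = last B" unfolding cy_def by simp
    also have "\<dots> = hd (take j q')" unfolding B_def by (simp add: last_rev)
    also have "\<dots> = q' ! 0" using False qne by (simp add: hd_conv_nth)
    finally show ?thesis .
  qed
  have wcy: "walk V T cy"
  proof (cases "j = 0")
    case True
    then show ?thesis unfolding cy_def B_def using wA by simp
  next
    case False
    have wB: "walk V T B" unfolding B_def using walk_rev walk_take[OF wq'] False by blast
    obtain j' where j': "j = Suc j'" using False by (cases j) auto
    have hB: "hd B = q' ! (j - 1)" unfolding B_def using j' j by (simp add: hd_rev take_Suc_conv_app_nth)
    have "{q' ! (j - 1), q' ! Suc (j - 1)} \<in> T" using walk_edge[OF wq', of "j - 1"] False j by simp
    then have "{last A, hd B} \<in> T" using lA hB j False by (simp add: insert_commute)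
    then show ?thesis unfolding cy_def using walk_append[OF wA wB] by simp
  qed
  have close: "{last cy, hd cy} \<in> T"
  proof -
    have "{(u # q') ! 0, (u # q') ! Suc 0} \<in> T" using walk_edge[OF wq, of 0] qne by simp
    then have "{u, q' ! 0} \<in> T" by simp
    moreover have "hd cy = u" unfolding cy_def A_def by simp
    ultimately show ?thesis using lastcy by (simp add: insert_commute)
  qed
  have dA: "distinct A" unfolding A_def using dp' by (auto dest: in_set_takeD)
  have dB: "distinct B" unfolding B_def using dq' by simp
  have disj: "set A \<inter> set B = {}"
  proof (rule ccontr)
    assume "set A \<inter> set B \<noteq> {}"
    then obtain x where x: "x \<in> set A" "x \<in> set B" by blast
    have xq: "x \<in> set (take j q')" using x(2) unfolding B_def by simp
    then have "x \<noteq> u" using dq' by (auto dest: in_set_takeD)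
    then have "x \<in> set (take (Suc i) p')" using x(1) unfolding A_def by simp
    then obtain t where t: "t < Suc i" "t < length p'" "p' ! t = x" by (auto simp: in_set_conv_nth)
    have "x \<in> set q'" using xq by (auto dest: in_set_takeD)
    then have "t = i" using imin t by (metis less_Suc_eq)
    then have "x = q' ! j" using t j by simp
    moreover obtain r where "r < j" "q' ! r = x" using xq j by (auto simp: in_set_conv_nth)
    ultimately show False using nth_eq_iff_index_eq[OF dq'(1), of r j] j by simp
  qed
  have dcy: "distinct cy" unfolding cy_def using dA dB disj by simp
  have "length cy = Suc (Suc i) + j" unfolding cy_def A_def B_def using i j by simp
  moreover have "\<not> (i = 0 \<and> j = 0)"
  proof
    assume "i = 0 \<and> j = 0"
    then have "p' ! 0 = q' ! 0" using j by simp
    then show False using hne pne qne by (simp add: hd_conv_nth)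
  qed
  ultimately have "length cy \<ge> 3" by linarith
  then have "is_cycle V T cy" unfolding is_cycle_def using dcy wcy close by simp
  then show ?thesis by blast
qed



lemma path_unique:
  assumes acyc: "\<forall>c. \<not> is_cycle V T c"
  shows "walk V T p \<Longrightarrow> distinct p \<Longrightarrow> walk V T q \<Longrightarrow> distinct q \<Longrightarrow> hd p = hd q \<Longrightarrow> last p = last q \<Longrightarrow> p = q"
proof (induction p arbitrary: q)
  case Nil
  then show ?case by (simp add: walk_def)
next
  case (Cons u p')
  obtain q' where q: "q = u # q'" using Cons.prems(3,5) by (cases q) (auto simp: walk_def)
  show ?case
  proof (cases "p' = []")
    case True
    show ?thesis
    proof (rule ccontr)
      assume "u # p' \<noteq> q"
      then have "q' \<noteq> []" using q True by simp
      then have "last q \<in> set q'" using q by simp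
      moreover have "last q = u" using Cons.prems(6) True by simp
      ultimately show False using Cons.prems(4) q by simp
    qed
  next
    case False
    have q'ne: "q' \<noteq> []"
    proof
      assume "q' = []"
      then have "last (u # p') = u" using Cons.prems(6) q by simp
      moreover have "last (u # p') \<in> set p'" using False by simp
      ultimately show False using Cons.prems(2) by simp
    qed
    show ?thesis
    proof (cases "hd p' = hd q'")
      case True
      have w1: "walk V T p'" using walk_tl[OF Cons.prems(1)] False by simp
      have w2: "walk V T q'" using walk_tl[OF Cons.prems(3)] q q'ne by simp
      have "p' = q'"
        using Cons.IH[OF w1 _ w2] Cons.prems(2,4,6) q False q'ne True by simp
      then show ?thesis using q by simp
    next
      case hne: False
      have "\<exists>c. is_cycle V T c"
        by (rule cycle_from_fork[of V T u p' q']) (use Cons.prems q False q'ne hne in auto)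
      then show ?thesis using acyc by blast
    qed
  qed
qed

lemma gd_le_sub: "T \<subseteq> E \<Longrightarrow> walk V T p \<Longrightarrow> gdist V E (hd p) (last p) < length p"
  using gd_le walk_mono by metis

locale tree_ctx =
  fixes V :: "'a set" and T :: "'a set set"
  assumes sg: "simple_graph V T" and conn: "connected_graph V T" and acyc: "\<forall>c. \<not> is_cycle V T c"
begin

abbreviation d where "d \<equiv> gdist V T"

definition tp where "tp u v = (THE p. walk V T p \<and> distinct p \<and> hd p = u \<and> last p = v)"

definition br where "br w v = tp w v ! 1"

lemma tp_eq: "walk V T p \<Longrightarrow> distinct p \<Longrightarrow> tp (hd p) (last p) = p"
  unfolding tp_def
  by (rule the_equality) (use path_unique[OF acyc] in blast)+

lemma tp: assumes "u \<in> V" "v \<in> V"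
  shows "walk V T (tp u v) \<and> distinct (tp u v) \<and> hd (tp u v) = u \<and> last (tp u v) = v \<and> length (tp u v) = Suc (d u v)"
proof -
  obtain g where g: "walk V T g" "hd g = u" "last g = v" "length g = Suc (d u v)"
    using gd_ex[OF conn assms] by blast
  have "distinct g" using geodesic_distinct[OF g(1)] g by simp
  then have "tp u v = g" using tp_eq[OF g(1)] g by simp
  then show ?thesis using g \<open>distinct g\<close> by simp
qed

lemma d_sym_le: assumes "u \<in> V" "v \<in> V" shows "d v u \<le> d u v"
proof -
  have t: "walk V T (tp u v)" "hd (tp u v) = u" "last (tp u v) = v" "length (tp u v) = Suc (d u v)"
    using tp[OF assms] by auto
  have ne: "tp u v \<noteq> []" using t(1) unfolding walk_def by blast
  have "d (hd (rev (tp u v))) (last (rev (tp u v))) < length (rev (tp u v))"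
    using gd_le walk_rev[OF t(1)] by blast
  then show ?thesis using t ne by (simp add: hd_rev last_rev)
qed

lemma d_sym: "u \<in> V \<Longrightarrow> v \<in> V \<Longrightarrow> d u v = d v u"
  using d_sym_le by (metis le_antisym)

lemma d_refl: "u \<in> V \<Longrightarrow> d u u = 0"
  using gd_le[of V T "[u]"] by (simp add: walk_single)

lemma d_tri: assumes "u \<in> V" "v \<in> V" "w \<in> V" shows "d u v \<le> d u w + d w v"
proof -
  have a: "walk V T (tp u w)" "hd (tp u w) = u" "last (tp u w) = w" "length (tp u w) = Suc (d u w)"
    using tp[OF assms(1,3)] by auto
  have b: "walk V T (tp w v)" "hd (tp w v) = w" "last (tp w v) = v" "length (tp w v) = Suc (d w v)"
    using tp[OF assms(3,2)] by auto
  have wk: "walk V T (tp u w @ tl (tp w v))" using walk_append_tl[OF a(1) b(1)] a b by simp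
  have ne: "tp u w \<noteq> []" using a(1) unfolding walk_def by blast
  have h: "hd (tp u w @ tl (tp w v)) = u" using a ne by simp
  have l: "last (tp u w @ tl (tp w v)) = v"
  proof (cases "tl (tp w v) = []")
    case True
    then have "tp w v = [w]" using b(1,2) by (cases "tp w v") (auto simp: walk_def)
    then show ?thesis using True a b by simp
  next
    case False
    then show ?thesis using b by (simp add: last_tl)
  qed
  have "d u v < length (tp u w @ tl (tp w v))" using gd_le[OF wk] h l by simp
  then show ?thesis using a b by simp
qed

lemma tp_len2: assumes "u \<in> V" "v \<in> V" "u \<noteq> v" shows "2 \<le> length (tp u v)"
proof -
  have t: "hd (tp u v) = u" "last (tp u v) = v" "tp u v \<noteq> []"
    using tp[OF assms(1,2)] unfolding walk_def by auto
  show ?thesis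
  proof (rule ccontr)
    assume "\<not> 2 \<le> length (tp u v)"
    moreover have "length (tp u v) \<noteq> 0" using t(3) by simp
    ultimately have "length (tp u v) = Suc 0" by linarith
    then obtain x where "tp u v = [x]" using length_Suc_conv[of "tp u v" 0] by auto
    then show False using t assms(3) by simp
  qed
qed

end



context tree_ctx
begin

lemma tpV: "u \<in> V \<Longrightarrow> v \<in> V \<Longrightarrow> set (tp u v) \<subseteq> V"
  using tp unfolding walk_def by blast

lemma br_edge:
  assumes w: "w \<in> V" and e: "{a,a'} \<in> T" and aw: "a \<noteq> w" and aw': "a' \<noteq> w"
  shows "br w a = br w a'"
proof -
  have aV: "a \<in> V" "a' \<in> V" using sg_edge[OF sg e] by auto
  define P where "P = tp w a"
  have P: "walk V T P" "distinct P" "hd P = w" "last P = a" using tp[OF w aV(1)] P_def by auto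
  have l2: "2 \<le> length P" using tp_len2[OF w aV(1)] aw P_def by simp
  show ?thesis
  proof (cases "a' \<in> set P")
    case False
    have wa': "walk V T [a']" using aV by (simp add: walk_single)
    have "{last P, hd [a']} \<in> T" using P e by simp
    then have w2: "walk V T (P @ [a'])" using walk_append[OF P(1) wa'] by simp
    have d2: "distinct (P @ [a'])" using P False by simp
    have "tp w a' = P @ [a']" using tp_eq[OF w2 d2] P l2 by (cases P) auto
    then have "br w a' = (P @ [a']) ! 1" unfolding br_def by simp
    also have "\<dots> = P ! 1" using l2 by (simp add: nth_append)
    finally show ?thesis unfolding br_def P_def by simp
  next
    case True
    then obtain j where j: "j < length P" "P ! j = a'" by (auto simp: in_set_conv_nth)
    have "P ! 0 = w" using P l2 by (cases P) auto
    then have "j \<noteq> 0" using j aw' by (cases j) auto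
    have w2: "walk V T (take (Suc j) P)" using walk_take[OF P(1)] by simp
    have d2: "distinct (take (Suc j) P)" using P by simp
    have h2: "hd (take (Suc j) P) = w" using P l2 by (cases P) auto
    have l2': "last (take (Suc j) P) = a'" using j by (simp add: take_Suc_conv_app_nth)
    have "tp w a' = take (Suc j) P" using tp_eq[OF w2 d2] h2 l2' by simp
    then have "br w a' = take (Suc j) P ! 1" unfolding br_def by simp
    also have "\<dots> = P ! 1" using \<open>j \<noteq> 0\<close> by simp
    finally show ?thesis unfolding br_def P_def by simp
  qed
qed

lemma br_walk: "walk V T q \<Longrightarrow> w \<in> V \<Longrightarrow> w \<notin> set q \<Longrightarrow> br w (hd q) = br w (last q)"
proof (induction q)
  case Nil
  then show ?case by (simp add: walk_def)
next
  case (Cons a q')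
  show ?case
  proof (cases q')
    case Nil
    then show ?thesis by simp
  next
    case (Cons b q'')
    have e: "{a,b} \<in> T" "walk V T q'" using Cons.prems(1) \<open>q' = b # q''\<close> walk_Cons2[of V T a b q''] by simp_all
    have "br w a = br w b" using br_edge[OF Cons.prems(2) e(1)] Cons.prems(3) \<open>q' = b # q''\<close> by auto
    moreover have "br w (hd q') = br w (last q')" using Cons.IH[OF e(2) Cons.prems(2)] Cons.prems(3) by simp
    ultimately show ?thesis using \<open>q' = b # q''\<close> by simp
  qed
qed

lemma on_path:
  assumes aV: "a \<in> V" "a' \<in> V" and j: "j < length (tp a a')"
  shows "d a (tp a a' ! j) + d (tp a a' ! j) a' \<le> d a a'"
proof -
  define P where "P = tp a a'"
  have P: "walk V T P" "hd P = a" "last P = a'" "length P = Suc (d a a')" using tp[OF aV] P_def by auto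
  have j': "j < length P" using j P_def by simp
  have w1: "walk V T (take (Suc j) P)" using walk_take[OF P(1)] by simp
  have h1: "hd (take (Suc j) P) = a" using P j' by (cases P) auto
  have l1: "last (take (Suc j) P) = P ! j" using j' by (simp add: take_Suc_conv_app_nth)
  have "d a (P ! j) < length (take (Suc j) P)" using gd_le[OF w1] h1 l1 by simp
  then have A: "d a (P ! j) \<le> j" using j' by simp
  have w2: "walk V T (drop j P)" using walk_drop[OF P(1) j'] .
  have h2: "hd (drop j P) = P ! j" using j' by (simp add: hd_drop_conv_nth)
  have l2: "last (drop j P) = a'" using j' P by simp
  have "d (P ! j) a' < length (drop j P)" using gd_le[OF w2] h2 l2 by simp
  then have B: "d (P ! j) a' < length P - j" by simp
  show ?thesis using A B P(4) j' unfolding P_def[symmetric] by linarith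
qed

lemma br_next:
  assumes "w \<in> V" "z \<in> V" "w \<noteq> z"
  shows "d (br w z) z < d w z" "br w z \<in> V"
proof -
  define Q where "Q = tp w z"
  have Q: "walk V T Q" "hd Q = w" "last Q = z" "length Q = Suc (d w z)" using tp[OF assms(1,2)] Q_def by auto
  have l2: "2 \<le> length Q" using tp_len2[OF assms] Q_def by simp
  have tne: "tl Q \<noteq> []" using l2 by (cases Q) auto
  have wt: "walk V T (tl Q)" using walk_tl[OF Q(1) tne] .
  have ht: "hd (tl Q) = Q ! 1" using tne l2 by (simp add: hd_conv_nth nth_tl)
  have lt: "last (tl Q) = z" using Q tne by (simp add: last_tl)
  have "d (Q ! 1) z < length (tl Q)" using gd_le[OF wt] ht lt by simp
  then show "d (br w z) z < d w z" unfolding br_def Q_def[symmetric] using Q(4) by simp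
  show "br w z \<in> V" unfolding br_def Q_def[symmetric] using Q(1) l2 walk_nth_V by fastforce
qed

lemma br_to_end:
  assumes xy: "x \<in> V" "y \<in> V" and j: "j < length (tp x y)" and ne: "tp x y ! j \<noteq> y"
  shows "Suc j < length (tp x y)" "br (tp x y ! j) y = tp x y ! Suc j"
proof -
  define P where "P = tp x y"
  have P: "walk V T P" "distinct P" "hd P = x" "last P = y" using tp[OF xy] P_def by auto
  have j': "j < length P" using j P_def by simp
  have "j \<noteq> length P - 1"
  proof
    assume "j = length P - 1"
    moreover have "P \<noteq> []" using j' by auto
    ultimately have "P ! j = last P" by (simp add: last_conv_nth)
    then show False using ne P(4) unfolding P_def by simp
  qed
  then show sj: "Suc j < length (tp x y)" using j' P_def by simp
  have w2: "walk V T (drop j P)" using walk_drop[OF P(1) j'] .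
  have d2: "distinct (drop j P)" using P by simp
  have h2: "hd (drop j P) = P ! j" using j' by (simp add: hd_drop_conv_nth)
  have l2: "last (drop j P) = y" using j' P by simp
  have "tp (P ! j) y = drop j P" using tp_eq[OF w2 d2] h2 l2 by simp
  then show "br (tp x y ! j) y = tp x y ! Suc j" unfolding br_def P_def[symmetric] using sj P_def by simp
qed

lemma br_to_start:
  assumes xy: "x \<in> V" "y \<in> V" and j: "j < length (tp x y)" and ne: "tp x y ! j \<noteq> x"
  shows "0 < j" "br (tp x y ! j) x = tp x y ! (j - 1)"
proof -
  define P where "P = tp x y"
  have P: "walk V T P" "distinct P" "hd P = x" "last P = y" using tp[OF xy] P_def by auto
  have j': "j < length P" using j P_def by simp
  show jp: "0 < j" using ne P(3) j' unfolding P_def[symmetric] by (cases j) (auto simp: hd_conv_nth)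
  define R where "R = rev (take (Suc j) P)"
  have w2: "walk V T R" unfolding R_def using walk_rev walk_take[OF P(1)] by blast
  have d2: "distinct R" unfolding R_def using P by simp
  have h2: "hd R = P ! j" unfolding R_def using j' by (simp add: hd_rev take_Suc_conv_app_nth)
  have l2: "last R = x" unfolding R_def using P j' by (cases P) (auto simp: last_rev)
  have "tp (P ! j) x = R" using tp_eq[OF w2 d2] h2 l2 by simp
  moreover have "R ! 1 = P ! (j - 1)" unfolding R_def using jp j' by (simp add: rev_nth)
  ultimately show "br (tp x y ! j) x = tp x y ! (j - 1)" unfolding br_def P_def[symmetric] by simp
qed

end



context tree_ctx
begin

lemma arc_near:
  assumes w: "w \<in> V" and fV: "\<forall>j. lo \<le> j \<and> j \<le> hi \<longrightarrow> f j \<in> V"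
    and fs: "\<forall>j. lo \<le> j \<and> j < hi \<longrightarrow> d (f j) (f (Suc j)) \<le> s"
    and lohi: "lo \<le> hi"
    and cond: "w = f lo \<or> w = f hi \<or> br w (f lo) \<noteq> br w (f hi)"
  shows "\<exists>j. lo \<le> j \<and> j \<le> hi \<and> 2 * d w (f j) \<le> s"
proof (rule ccontr)
  assume "\<not> ?thesis"
  then have far: "\<And>j. lo \<le> j \<Longrightarrow> j \<le> hi \<Longrightarrow> s < 2 * d w (f j)" by auto
  have neq: "\<And>j. lo \<le> j \<Longrightarrow> j \<le> hi \<Longrightarrow> f j \<noteq> w"
  proof
    fix j assume j: "lo \<le> j" "j \<le> hi" "f j = w"
    then have "s < 2 * d w w" using far by metis
    then show False using d_refl[OF w] by simp
  qed
  have step: "\<And>j. lo \<le> j \<Longrightarrow> j < hi \<Longrightarrow> br w (f j) = br w (f (Suc j))"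
  proof -
    fix j assume j: "lo \<le> j" "j < hi"
    have aV: "f j \<in> V" "f (Suc j) \<in> V" using fV j by auto
    define P where "P = tp (f j) (f (Suc j))"
    have P: "walk V T P" "hd P = f j" "last P = f (Suc j)" using tp[OF aV] P_def by auto
    have "w \<notin> set P"
    proof
      assume "w \<in> set P"
      then obtain t where t: "t < length P" "P ! t = w" by (auto simp: in_set_conv_nth)
      have "d (f j) w + d w (f (Suc j)) \<le> d (f j) (f (Suc j))"
        using on_path[OF aV, of t] t unfolding P_def by simp
      also have "\<dots> \<le> s" using fs j by auto
      finally have "d w (f j) + d w (f (Suc j)) \<le> s" using d_sym[OF aV(1) w] by simp
      moreover have "s < 2 * d w (f j)" "s < 2 * d w (f (Suc j))" using far j by auto
      ultimately show False by linarith
    qed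
    then show "br w (f j) = br w (f (Suc j))" using br_walk[OF P(1) w] P by simp
  qed
  have all: "\<And>i. i \<le> hi - lo \<Longrightarrow> br w (f (lo + i)) = br w (f lo)"
  proof -
    fix i show "i \<le> hi - lo \<Longrightarrow> br w (f (lo + i)) = br w (f lo)"
    proof (induction i)
      case 0 then show ?case by simp
    next
      case (Suc i)
      then have "br w (f (lo + i)) = br w (f lo)" by simp
      moreover have "br w (f (lo + i)) = br w (f (Suc (lo + i)))" using step Suc.prems by simp
      ultimately show ?case by simp
    qed
  qed
  have "br w (f hi) = br w (f lo)" using all[of "hi - lo"] lohi by simp
  moreover have "w \<noteq> f lo" "w \<noteq> f hi" using neq lohi by (metis order_refl)+
  ultimately show False using cond by simp
qed

lemma median:
  assumes xyz: "x \<in> V" "y \<in> V" "z \<in> V"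
  shows "\<exists>w\<in>V. (w = x \<or> w = y \<or> br w x \<noteq> br w y) \<and> (w = y \<or> w = z \<or> br w y \<noteq> br w z)
           \<and> (w = z \<or> w = x \<or> br w z \<noteq> br w x)"
proof -
  define P where "P = tp x y"
  have P: "walk V T P" "distinct P" "hd P = x" "last P = y" using tp[OF xyz(1,2)] P_def by auto
  have "0 < length P" using P(1) unfolding walk_def by simp
  then obtain j where j: "j < length P" and jmin: "\<And>i. i < length P \<Longrightarrow> d (P ! j) z \<le> d (P ! i) z"
    using ex_has_least_nat[of "\<lambda>j. j < length P" 0 "\<lambda>j. d (P ! j) z"] by blast
  define w where "w = P ! j"
  have wV: "w \<in> V" using walk_nth_V[OF P(1) j] w_def by simp
  have j': "j < length (tp x y)" using j P_def by simp
  have c1: "w = x \<or> w = y \<or> br w x \<noteq> br w y"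
  proof (cases "w = x \<or> w = y")
    case False
    then have a: "Suc j < length P" "br w y = P ! Suc j" using br_to_end[OF xyz(1,2) j'] unfolding w_def P_def by auto
    have b: "0 < j" "br w x = P ! (j - 1)" using br_to_start[OF xyz(1,2) j'] False unfolding w_def P_def by auto
    have "P ! Suc j \<noteq> P ! (j - 1)" using nth_eq_iff_index_eq[OF P(2), of "Suc j" "j - 1"] a b by simp
    then show ?thesis using a b by simp
  qed auto
  have c2: "w = y \<or> w = z \<or> br w y \<noteq> br w z"
  proof (rule ccontr)
    assume h: "\<not> ?thesis"
    then have a: "Suc j < length P" "br w y = P ! Suc j" using br_to_end[OF xyz(1,2) j'] unfolding w_def P_def by auto
    have "d (br w z) z < d w z" using br_next[OF wV xyz(3)] h by simp
    then have "d (P ! Suc j) z < d (P ! j) z" using a h w_def by simp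
    then show False using jmin[OF a(1)] by simp
  qed
  have c3: "w = z \<or> w = x \<or> br w z \<noteq> br w x"
  proof (rule ccontr)
    assume h: "\<not> ?thesis"
    then have a: "0 < j" "br w x = P ! (j - 1)" using br_to_start[OF xyz(1,2) j'] unfolding w_def P_def by auto
    have "d (br w z) z < d w z" using br_next[OF wV xyz(3)] h by simp
    then have "d (P ! (j - 1)) z < d (P ! j) z" using a h w_def by simp
    moreover have "j - 1 < length P" using j by simp
    ultimately show False using jmin[of "j - 1"] by simp
  qed
  show ?thesis using wV c1 c2 c3 by blast
qed

lemma d_sub: "T \<subseteq> E \<Longrightarrow> u \<in> V \<Longrightarrow> v \<in> V \<Longrightarrow> gdist V E u v \<le> d u v"
  using gd_le_sub[of T E V "tp u v"] tp[of u v] by simp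

end



lemma stretch_ge:
  assumes sgE: "simple_graph V E" and st: "spanning_tree V E T" and ks: "k_supported V E k cyc"
  shows "k \<le> real (stretch V E T)"
proof -
  have TE: "T \<subseteq> E" and conn: "connected_graph V T" and acyc: "\<forall>c. \<not> is_cycle V T c"
    using st unfolding spanning_tree_def is_tree_def by auto
  have sgT: "simple_graph V T" using sgE TE unfolding simple_graph_def by blast
  interpret tree_ctx V T using sgT conn acyc by (unfold_locales) auto
  define s where "s = stretch V E T"
  have fV: "finite V" using sgE unfolding simple_graph_def by blast
  have fin: "finite {gdist V T u v | u v. {u, v} \<in> E}"
  proof (rule finite_subset)
    show "{gdist V T u v | u v. {u, v} \<in> E} \<subseteq> (\<lambda>(u,v). gdist V T u v) ` (V \<times> V)"
    proof
      fix x assume "x \<in> {gdist V T u v | u v. {u, v} \<in> E}"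
      then obtain u v where "x = gdist V T u v" "{u,v} \<in> E" by blast
      moreover have "u \<in> V" "v \<in> V" using sg_edge[OF sgE \<open>{u,v} \<in> E\<close>] by auto
      ultimately show "x \<in> (\<lambda>(u,v). gdist V T u v) ` (V \<times> V)" by auto
    qed
    show "finite ((\<lambda>(u,v). gdist V T u v) ` (V \<times> V))" using fV by simp
  qed
  have eb: "\<And>a b. {a,b} \<in> E \<Longrightarrow> d a b \<le> s"
  proof -
    fix a b assume "{a,b} \<in> E"
    then have "d a b \<in> {gdist V T u v | u v. {u, v} \<in> E}" by blast
    then show "d a b \<le> s" unfolding s_def stretch_def using fin by (rule Max_ge[rotated])
  qed
  show ?thesis
  proof (rule ccontr)
    assume "\<not> k \<le> real (stretch V E T)"
    then have sk: "real s < k" unfolding s_def by simp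
    obtain b c where bc: "0 < b" "b < c" "c < length cyc"
      and sup: "\<forall>u1\<in>{cyc ! i | i. i \<le> b}. \<forall>u2\<in>{cyc ! i | i. b \<le> i \<and> i \<le> c}.
            \<forall>u3\<in>{cyc ! i | i. c \<le> i \<and> i < length cyc} \<union> {cyc ! 0}.
              max (max (real (gdist V E u1 u2)) (real (gdist V E u2 u3))) (real (gdist V E u1 u3)) \<ge> k"
      and cy: "is_cycle V E cyc"
      using ks unfolding k_supported_def Let_def by blast
    define m where "m = length cyc"
    have wc: "walk V E cyc" and m3: "3 \<le> m" and cl: "{last cyc, hd cyc} \<in> E"
      using cy unfolding is_cycle_def m_def by auto
    have cne: "cyc \<noteq> []" using m3 m_def by auto
    have cV: "\<And>i. i < m \<Longrightarrow> cyc ! i \<in> V" using walk_nth_V[OF wc] m_def by simp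
    have x: "cyc ! 0 \<in> V" "cyc ! b \<in> V" "cyc ! c \<in> V" using cV[of 0] cV[of b] cV[of c] bc m_def cne by auto
    obtain w where wV: "w \<in> V"
      and m1: "w = cyc ! 0 \<or> w = cyc ! b \<or> br w (cyc ! 0) \<noteq> br w (cyc ! b)"
      and m2: "w = cyc ! b \<or> w = cyc ! c \<or> br w (cyc ! b) \<noteq> br w (cyc ! c)"
      and m3': "w = cyc ! c \<or> w = cyc ! 0 \<or> br w (cyc ! c) \<noteq> br w (cyc ! 0)"
      using median[OF x] by blast
    have cs: "\<And>j. Suc j < m \<Longrightarrow> d (cyc ! j) (cyc ! Suc j) \<le> s"
      using walk_edge[OF wc] eb m_def by blast
    obtain j1 where j1: "0 \<le> j1" "j1 \<le> b" "2 * d w (cyc ! j1) \<le> s"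
      using arc_near[OF wV, of 0 b "\<lambda>j. cyc ! j" s] cV cs bc m_def m1 by auto
    obtain j2 where j2: "b \<le> j2" "j2 \<le> c" "2 * d w (cyc ! j2) \<le> s"
      using arc_near[OF wV, of b c "\<lambda>j. cyc ! j" s] cV cs bc m_def m2 by auto
    define f where "f = (\<lambda>j. if j < m then cyc ! j else cyc ! 0)"
    have fV': "\<forall>j. c \<le> j \<and> j \<le> m \<longrightarrow> f j \<in> V" unfolding f_def using cV m3 by auto
    have fs: "\<forall>j. c \<le> j \<and> j < m \<longrightarrow> d (f j) (f (Suc j)) \<le> s"
    proof (intro allI impI)
      fix j assume j: "c \<le> j \<and> j < m"
      show "d (f j) (f (Suc j)) \<le> s"
      proof (cases "Suc j < m")
        case True
        then show ?thesis unfolding f_def using cs j by simp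
      next
        case False
        then have jm: "j = m - 1" using j by linarith
        have "last cyc = cyc ! j" using jm cne m_def by (simp add: last_conv_nth)
        moreover have "hd cyc = cyc ! 0" using cne by (simp add: hd_conv_nth)
        ultimately have "{cyc ! j, cyc ! 0} \<in> E" using cl by simp
        then have "d (cyc ! j) (cyc ! 0) \<le> s" using eb by blast
        then show ?thesis unfolding f_def using j False by simp
      qed
    qed
    have f3: "w = f c \<or> w = f m \<or> br w (f c) \<noteq> br w (f m)" unfolding f_def using m3' bc m_def by simp
    obtain j3 where j3: "c \<le> j3" "j3 \<le> m" "2 * d w (f j3) \<le> s"
      using arc_near[OF wV fV' fs _ f3] bc m_def by auto
    define u1 where "u1 = cyc ! j1"
    define u2 where "u2 = cyc ! j2"
    define u3 where "u3 = f j3"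
    have uV: "u1 \<in> V" "u2 \<in> V" "u3 \<in> V" unfolding u1_def u2_def u3_def using cV j1 j2 j3 bc m_def fV' by auto
    have in1: "u1 \<in> {cyc ! i | i. i \<le> b}" unfolding u1_def using j1 by blast
    have in2: "u2 \<in> {cyc ! i | i. b \<le> i \<and> i \<le> c}" unfolding u2_def using j2 by blast
    have in3: "u3 \<in> {cyc ! i | i. c \<le> i \<and> i < length cyc} \<union> {cyc ! 0}"
      unfolding u3_def f_def using j3 m_def by auto
    have du: "\<And>a a'. a \<in> V \<Longrightarrow> a' \<in> V \<Longrightarrow> 2 * d w a \<le> s \<Longrightarrow> 2 * d w a' \<le> s \<Longrightarrow> real (gdist V E a a') \<le> real s"
    proof -
      fix a a' assume h: "a \<in> V" "a' \<in> V" "2 * d w a \<le> s" "2 * d w a' \<le> s"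
      have "gdist V E a a' \<le> d a a'" using d_sub[OF TE h(1,2)] .
      also have "\<dots> \<le> d a w + d w a'" using d_tri[OF h(1,2) wV] .
      also have "\<dots> = d w a + d w a'" using d_sym[OF h(1) wV] by simp
      also have "\<dots> \<le> s" using h(3,4) by linarith
      finally show "real (gdist V E a a') \<le> real s" by simp
    qed
    have "real (gdist V E u1 u2) \<le> real s" "real (gdist V E u2 u3) \<le> real s" "real (gdist V E u1 u3) \<le> real s"
      using du uV j1(3) j2(3) j3(3) unfolding u1_def u2_def u3_def by auto
    then have "max (max (real (gdist V E u1 u2)) (real (gdist V E u2 u3))) (real (gdist V E u1 u3)) < k"
      using sk by simp
    moreover have "max (max (real (gdist V E u1 u2)) (real (gdist V E u2 u3))) (real (gdist V E u1 u3)) \<ge> k"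
      using sup in1 in2 in3 by blast
    ultimately show False by (simp add: max_def split: if_splits)
  qed
qed

theorem mainTheorem1:
  fixes V :: "'a set" and E :: "'a set set" and k :: real
  assumes "simple_graph V E"
    and "connected_graph V E"
    and "k \<ge> 0"
    and "\<exists>cyc. k_supported V E k cyc"
  shows "real (tree_stretch V E) \<ge> k"
proof -
  obtain cyc where ks: "k_supported V E k cyc" using assms(4) by blast
  obtain T0 where T0: "spanning_tree V E T0" using spanning_tree_exists[OF assms(1,2)] by blast
  have fE: "finite E" using sg_finite_E[OF assms(1)] .
  have eq: "{stretch V E T | T. spanning_tree V E T} = stretch V E ` {T. spanning_tree V E T}" by blast
  have "{T. spanning_tree V E T} \<subseteq> Pow E" unfolding spanning_tree_def by blast
  then have "finite {T. spanning_tree V E T}" by (rule finite_subset) (simp add: fE)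
  then have fin: "finite {stretch V E T | T. spanning_tree V E T}" unfolding eq by simp
  have ne: "{stretch V E T | T. spanning_tree V E T} \<noteq> {}" using T0 by blast
  have "tree_stretch V E \<in> {stretch V E T | T. spanning_tree V E T}"
    unfolding tree_stretch_def using Min_in[OF fin ne] .
  then obtain T where T: "spanning_tree V E T" "tree_stretch V E = stretch V E T" by blast
  show ?thesis using stretch_ge[OF assms(1) T(1) ks] T(2) by simp
qed


end
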